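(* For all integers $v\ge1$ and $0\le i\le v-1$, $$c_{2v,i}=2^{2i}\,\frac{\Gamma(2v-2i)}{\Gamma(2v)}\,s(v,i).$$
   Context: The generalized cosecant numbers $c_{\rho,k}$ are defined as the coefficients of the power series $\left(\frac{x}{\sin x}\right)^{\rho}=\sum_{k\ge0}c_{\rho,k}\,x^{2k}$ (for $|x|<\pi$); in particular $c_{\rho,0}=1$ and $c_{\rho,1}=\rho/6$. For integers $v\ge1$ and $0\le n\le v-1$, $s(v,n)$ denotes the $n$-th elementary symmetric polynomial evaluated at $1^2,2^2,\dots,(v-1)^2$, with $s(v,0)=1$. *)

theory Defs
  imports "HOL-Analysis.Analysis"
begin

text \<open>The function x / sin x raised to the power rho, with its removable
  singularity at 0 filled in by the limiting value 1.  For 0 < |x| < pi we have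
  x / sin x > 0, so the real power is well defined there.\<close>
definition cosec_pow :: "real \<Rightarrow> real \<Rightarrow> real" where
  "cosec_pow \<rho> x = (if x = 0 then 1 else (x / sin x) powr \<rho>)"

definition cosec_num :: "real \<Rightarrow> nat \<Rightarrow> real" where
  "cosec_num \<rho> = (THE c. \<forall>x. \<bar>x\<bar> < pi \<longrightarrow>
      (\<lambda>k. c k * x ^ (2 * k)) sums cosec_pow \<rho> x)"

definition esym_sq :: "nat \<Rightarrow> nat \<Rightarrow> real" where
  "esym_sq v n = (\<Sum>S\<in>{S. S \<subseteq> {1..<v} \<and> card S = n}. \<Prod>j\<in>S. (real j)^2)"

end

theory Submission
  imports Defs "HOL-Computational_Algebra.Formal_Power_Series" "HOL-Complex_Analysis.Complex_Analysis"
begin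


definition Tf :: "'a::field_char_0 fps" where "Tf = fps_shift 1 (fps_sin 1)"

lemma Tf_X: "fps_X * (Tf :: 'a::field_char_0 fps) = fps_sin 1"
  by (intro fps_ext) (auto simp: Tf_def)

lemma Tf_0: "fps_nth (Tf :: 'a::field_char_0 fps) 0 = 1"
  by (simp add: Tf_def)

lemma Tf_d1: "fps_X * fps_deriv (Tf :: 'a::field_char_0 fps) = fps_cos 1 - Tf"
proof -
  have "fps_deriv (fps_X * (Tf::'a fps)) = fps_cos 1" by (simp add: Tf_X fps_sin_deriv)
  thus ?thesis by (simp add: algebra_simps)
qed

lemma fps_const_m1: "fps_const (-1) * f = - (f :: 'a::ring_1 fps)"
  by (intro fps_ext) simp

lemma Tf_d2: "fps_X^2 * fps_deriv (fps_deriv (Tf :: 'a::field_char_0 fps)) = 2 * Tf - 2 * fps_cos 1 - fps_X^2 * Tf"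
proof -
  have "fps_deriv (fps_X * fps_deriv (Tf::'a fps)) = fps_deriv (fps_cos 1 - Tf)" by (simp add: Tf_d1)
  hence "fps_deriv Tf + fps_X * fps_deriv (fps_deriv (Tf::'a fps)) = - fps_sin 1 - fps_deriv Tf"
    by (simp add: fps_cos_deriv fps_const_m1)
  hence "fps_X * fps_deriv (fps_deriv (Tf::'a fps)) = - fps_X * Tf - 2 * fps_deriv Tf"
    by (simp add: Tf_X[symmetric] algebra_simps)
  hence "fps_X * (fps_X * fps_deriv (fps_deriv (Tf::'a fps))) = fps_X * (- fps_X * Tf - 2 * fps_deriv Tf)"
    by simp
  also have "\<dots> = - (fps_X^2 * Tf) - 2 * (fps_cos 1 - Tf)" 
    by (simp add: Tf_d1[symmetric] algebra_simps power2_eq_square)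
  finally show ?thesis by (simp add: power2_eq_square algebra_simps)
qed

lemma Tf_sq: "(fps_cos 1 :: 'a::field_char_0 fps)^2 = 1 - fps_X^2 * Tf^2"
  using fps_sin_cos_sum_of_squares[of "1::'a"] Tf_X[where 'a='a]
  by (metis add_diff_cancel_right' power_mult_distrib)

definition Qf :: "'a::field_char_0 fps" where "Qf = inverse Tf"

lemma Qf_Tf: "Qf * (Tf :: 'a::field_char_0 fps) = 1"
  unfolding Qf_def by (rule inverse_mult_eq_1) (simp add: Tf_0)

lemma Qf_d: "fps_deriv (Qf :: 'a::field_char_0 fps) = - (Qf^2 * fps_deriv Tf)"
proof -
  have "fps_deriv (Qf * (Tf::'a fps)) = 0" by (simp add: Qf_Tf)
  hence "fps_deriv Qf * Tf + Qf * fps_deriv (Tf::'a fps) = 0" by (simp add: algebra_simps)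
  hence "Qf * (fps_deriv Qf * Tf + Qf * fps_deriv (Tf::'a fps)) = 0" by simp
  hence "fps_deriv Qf * (Qf * Tf) + Qf^2 * fps_deriv (Tf::'a fps) = 0"
    by (simp add: algebra_simps power2_eq_square)
  thus ?thesis by (simp add: Qf_Tf eq_neg_iff_add_eq_0)
qed

lemma fps_deriv_pow_Suc: "fps_deriv (a ^ Suc k) = of_nat (Suc k) * fps_deriv a * (a::'a::comm_semiring_1 fps) ^ k"
  using fps_deriv_power'[of a "Suc k"] by simp

lemma key_ode:
  fixes n :: nat and N :: "'a::field_char_0 fps"
  defines "N \<equiv> of_nat n"
  shows "N*(N+1) * Qf^n - 2*N*fps_X*fps_deriv (Qf^n) + fps_X^2 * fps_deriv (fps_deriv (Qf^n))
      + N^2 * fps_X^2 * Qf^n = N*(N+1) * (Qf::'a fps)^(n+2)"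
proof (cases n)
  case 0 then show ?thesis by (simp add: N_def)
next
  case (Suc m)
  let ?q = "Qf::'a fps" and ?T = "Tf::'a fps" and ?C = "fps_cos 1 :: 'a fps"
  define P where "P = ?q^n"
  have N': "fps_deriv N = 0" by (simp add: N_def)
  have d1: "fps_deriv P = - (N * P * ?q * fps_deriv ?T)"
    unfolding P_def Suc by (simp only: fps_deriv_pow_Suc Qf_d) (simp add: N_def Suc algebra_simps power2_eq_square)
  have d2: "fps_deriv (fps_deriv P) = N*(N+1) * P * ?q^2 * (fps_deriv ?T)^2 - N * P * ?q * fps_deriv (fps_deriv ?T)"
    unfolding d1 by (simp add: N' d1 Qf_d algebra_simps power2_eq_square)
  have e1: "fps_X*fps_deriv P = - (N * P * ?q * (?C - ?T))"
    unfolding d1 Tf_d1[symmetric] by (simp add: algebra_simps)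
  have e2: "fps_X^2 * fps_deriv (fps_deriv P) = N*(N+1) * P * ?q^2 * (?C - ?T)^2 - N * P * ?q * (2 * ?T - 2 * ?C - fps_X^2 * ?T)"
    unfolding d2 Tf_d1[symmetric] Tf_d2[symmetric] by (simp add: algebra_simps power2_eq_square)
  have qT: "?q * ?T = 1" by (rule Qf_Tf)
  have C2: "?C^2 = 1 - fps_X^2 * ?T^2" by (rule Tf_sq)
  have "N*(N+1) * P - 2*N*fps_X*fps_deriv P + fps_X^2 * fps_deriv (fps_deriv P)
      + N^2 * fps_X^2 * P = N*(N+1) * P * ?q^2" (is "?L = _")
  proof -
    have "?L = N*(N+1)*P - 2*N*(fps_X*fps_deriv P) + fps_X^2 * fps_deriv (fps_deriv P) + N^2*fps_X^2*P"
      by (simp add: algebra_simps)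
    also have "\<dots> = N*(N+1)*P - 2*N*(- (N * P * ?q * (?C - ?T))) + (N*(N+1) * P * ?q^2 * (?C - ?T)^2 - N * P * ?q * (2 * ?T - 2 * ?C - fps_X^2 * ?T)) + N^2*fps_X^2*P"
      by (simp only: e1 e2)
    also have "\<dots> = N*(N+1) * P * ?q^2"
      using qT C2 by algebra
    finally show ?thesis .
  qed
  thus ?thesis by (simp add: P_def power_add power2_eq_square)
qed

lemma fps_nat_mult_nth: "fps_nth (of_nat n * f) j = of_nat n * (fps_nth f j :: 'a::comm_semiring_1)"
  by (simp add: fps_of_nat[symmetric])

lemma nth_ode:
  fixes P R :: "'a::field_char_0 fps"
  assumes "fps_const a * P - fps_const b * (fps_X * fps_deriv P) + fps_X^2 * fps_deriv (fps_deriv P)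
      + fps_const c * (fps_X^2 * P) = fps_const a * R"
  shows "a * fps_nth R j = (a - b * of_nat j + of_nat j*(of_nat j - 1)) * fps_nth P j
     + (if j \<ge> 2 then c * fps_nth P (j-2) else 0)"
proof -
  have "fps_nth (fps_const a * P - fps_const b * (fps_X * fps_deriv P) + fps_X^2 * fps_deriv (fps_deriv P)
      + fps_const c * (fps_X^2 * P)) j = fps_nth (fps_const a * R) j" (is ?H) using assms by simp
  note H = this
  then show ?thesis
  proof (cases j)
    case 0 with H show ?thesis by (simp add: fps_X_power_mult_nth) metis
  next
    case (Suc k)
    show ?thesis
    proof (cases k)
      case 0 with H Suc show ?thesis by (simp add: fps_X_power_mult_nth algebra_simps)
    next
      case (Suc l) with H \<open>j = Suc k\<close> show ?thesis apply (simp add: fps_X_power_mult_nth) apply (simp add: algebra_simps) done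
    qed
  qed
qed

lemma coeff_rec:
  fixes n j :: nat
  shows "of_nat n*(of_nat n+1) * fps_nth ((Qf::'a::field_char_0 fps)^(n+2)) j =
     (of_nat n*(of_nat n+1) - 2* of_nat n* of_nat j + of_nat j*(of_nat j - 1)) * fps_nth (Qf^n) j
     + (if j \<ge> 2 then of_nat n^2 * fps_nth (Qf^n) (j-2) else 0)"
proof -
  let ?N = "of_nat n :: 'a fps"
  have K: "?N*(?N+1) * Qf^n - 2*?N*fps_X*fps_deriv (Qf^n) + fps_X^2 * fps_deriv (fps_deriv (Qf^n))
      + ?N^2 * fps_X^2 * Qf^n = ?N*(?N+1) * (Qf::'a fps)^(n+2)"
    by (rule key_ode)
  have cN: "?N = fps_const (of_nat n)" by (rule fps_of_nat[symmetric])
  have c1: "?N*(?N+1) = fps_const (of_nat n*(of_nat n+1))" unfolding cN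
    by (metis fps_const_1_eq_1 fps_const_add fps_const_mult)
  have c2: "2*?N = fps_const (2* of_nat n)" unfolding cN
    by (metis fps_const_mult fps_numeral_fps_const)
  have c3: "?N^2 = fps_const (of_nat n^2)" unfolding cN by (rule fps_const_power)
  from K[unfolded c1 c2 c3]
  have "fps_const (of_nat n*(of_nat n+1)) * Qf^n - fps_const (2* of_nat n)*(fps_X*fps_deriv (Qf^n)) + fps_X^2 * fps_deriv (fps_deriv (Qf^n))
      + fps_const (of_nat n^2) * (fps_X^2 * Qf^n) = fps_const (of_nat n*(of_nat n+1)) * (Qf::'a fps)^(n+2)"
    by (simp only: mult.assoc)
  from nth_ode[OF this, of j] show ?thesis by (simp add: algebra_simps)
qed

fun es :: "nat \<Rightarrow> nat \<Rightarrow> nat" where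
  "es v 0 = 1"
| "es 0 (Suc i) = 0"
| "es (Suc v) (Suc i) = es v (Suc i) + v^2 * es v i"

lemma es_zero: "v \<le> Suc i \<Longrightarrow> es v (Suc i) = 0"
proof (induction v arbitrary: i)
  case 0 then show ?case by simp
next
  case (Suc v)
  then show ?case by (cases i) auto
qed

lemma Qf_nth0: "fps_nth ((Qf::'a::field_char_0 fps)^n) 0 = 1"
proof -
  have "fps_nth (Qf::'a fps) 0 = 1" unfolding Qf_def by (simp add: Tf_0)
  thus ?thesis by (simp add: fps_nth_power_0)
qed

lemma rec2:
  fixes w i :: nat
  shows "of_nat (2*w)*(of_nat (2*w)+1) * fps_nth ((Qf::'a::field_char_0 fps)^(2*(w+1))) (2*i+2) =
     (of_nat (2*w)*(of_nat (2*w)+1) - 2* of_nat (2*w)* of_nat (2*i+2) + of_nat (2*i+2)*(of_nat (2*i+2) - 1)) * fps_nth (Qf^(2*w)) (2*i+2)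
     + of_nat (2*w)^2 * fps_nth (Qf^(2*w)) (2*i)"
  using coeff_rec[of "2*w" "2*i+2", where 'a='a] by (simp add: algebra_simps)

lemma closed_S:
  "fps_nth ((Qf::'a::field_char_0 fps)^(2*(i+m+1))) (2*i) * fact (2*i+2*m+1)
     = 4^i * fact (2*m+1) * of_nat (es (i+m+1) i)"
proof (induction i arbitrary: m)
  case 0
  have "fps_nth ((Qf::'a fps)^(2*(0+m+1))) (2*0) = 1" using Qf_nth0[of "2*(0+m+1)", where 'a='a] by (simp only: mult_0_right)
  then show ?case by (simp only: es.simps power_0 mult_1 mult_1_left mult_1_right add_0 mult_0_right of_nat_1)
next
  case (Suc i)
  note OIH = Suc.IH
  show ?case
  proof (induction m)
    case 0
    have R: "of_nat (2*(i+1))*(of_nat (2*(i+1))+1) * fps_nth ((Qf::'a fps)^(2*(i+2))) (2*i+2) =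
      of_nat (2*(i+1))^2 * fps_nth (Qf^(2*(i+1))) (2*i)"
      using rec2[of "i+1" i, where 'a='a] by (simp add: algebra_simps)
    have IH: "fps_nth ((Qf::'a fps)^(2*(i+1))) (2*i) * fact (2*i+1) = 4^i * of_nat (es (i+1) i)"
      using Suc.IH[of 0] by simp
    have es: "es (i+2) (i+1) = (i+1)^2 * es (i+1) i" using es_zero[of "i+1" i] by simp
    have F: "(fact (2*i+3) :: 'a) = of_nat (2*i+3) * of_nat (2*i+2) * fact (2*i+1)"
      by (simp add: fact_Suc numeral_3_eq_3 eval_nat_numeral)
    let ?A' = "fps_nth ((Qf::'a fps)^(2*(i+2))) (2*i+2)" and ?A = "fps_nth ((Qf::'a fps)^(2*(i+1))) (2*i)"
    have "?A' * fact (2*i+3) = (of_nat (2*(i+1))*(of_nat (2*(i+1))+1) * ?A') * fact (2*i+1)"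
      unfolding F by (simp add: algebra_simps)
    also have "\<dots> = of_nat (2*(i+1))^2 * (?A * fact (2*i+1))" unfolding R by (simp add: algebra_simps)
    also have "\<dots> = 4^(i+1) * of_nat (es (i+2) (i+1))" unfolding IH es by (simp add: algebra_simps power2_eq_square)
    finally have X: "?A' * fact (2*i+3) = 4^(i+1) * of_nat (es (i+2) (i+1))" .
    show ?case using X by (simp add: eval_nat_numeral algebra_simps)
  next
    case (Suc m)
    define w where "w = i+m+2"
    let ?A' = "fps_nth ((Qf::'a fps)^(2*(w+1))) (2*i+2)" and ?B = "fps_nth ((Qf::'a fps)^(2*w)) (2*i+2)"
      and ?C = "fps_nth ((Qf::'a fps)^(2*w)) (2*i)"
    have R: "of_nat (2*w)*(of_nat (2*w)+1) * ?A' = of_nat (2*m+2) * of_nat (2*m+3) * ?B + of_nat (2*w)^2 * ?C"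
      using rec2[of w i, where 'a='a] by (simp add: w_def algebra_simps)
    have IB: "?B * fact (2*i+2*m+3) = 4^(i+1) * fact (2*m+1) * of_nat (es w (i+1))"
      using Suc.IH by (simp add: w_def eval_nat_numeral algebra_simps)
    have IC: "?C * fact (2*i+2*m+3) = 4^i * fact (2*m+3) * of_nat (es w i)"
      using OIH[of "m+1"] by (simp add: w_def eval_nat_numeral algebra_simps)
    have es: "es (w+1) (i+1) = es w (i+1) + w^2 * es w i" by simp
    have F1: "(fact (2*i+2*m+5) :: 'a) = of_nat (2*w) * (of_nat (2*w)+1) * fact (2*i+2*m+3)"
      by (simp add: w_def fact_Suc eval_nat_numeral algebra_simps)
    have F2: "(fact (2*m+3) :: 'a) = of_nat (2*m+2) * of_nat (2*m+3) * fact (2*m+1)"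
      by (simp add: fact_Suc eval_nat_numeral algebra_simps)
    have "?A' * fact (2*i+2*m+5) = (of_nat (2*w)*(of_nat (2*w)+1) * ?A') * fact (2*i+2*m+3)"
      unfolding F1 by (simp add: algebra_simps)
    also have "\<dots> = of_nat (2*m+2) * of_nat (2*m+3) * (?B * fact (2*i+2*m+3)) + of_nat (2*w)^2 * (?C * fact (2*i+2*m+3))"
      unfolding R by (simp add: algebra_simps)
    also have "\<dots> = 4^(i+1) * fact (2*m+3) * of_nat (es (w+1) (i+1))"
      unfolding IB IC es F2 by (simp add: algebra_simps power2_eq_square)
    finally have X: "?A' * fact (2*i+2*m+5) = 4^(i+1) * fact (2*m+3) * of_nat (es (w+1) (i+1))" .
    show ?case using X by (simp add: w_def eval_nat_numeral algebra_simps)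
  qed
qed



lemma subsets_insert_card:
  assumes "finite A" "a \<notin> A"
  shows "{S. S \<subseteq> insert a A \<and> card S = Suc i} =
     {S. S \<subseteq> A \<and> card S = Suc i} \<union> insert a ` {S. S \<subseteq> A \<and> card S = i}"
proof (intro equalityI subsetI)
  fix S assume S: "S \<in> {S. S \<subseteq> insert a A \<and> card S = Suc i}"
  show "S \<in> {S. S \<subseteq> A \<and> card S = Suc i} \<union> insert a ` {S. S \<subseteq> A \<and> card S = i}"
  proof (cases "a \<in> S")
    case True
    have "S = insert a (S - {a})" using True by auto
    moreover have "S - {a} \<subseteq> A" using S by auto
    moreover have "card (S - {a}) = i" using S True by (simp add: card_Diff_singleton)
    ultimately show ?thesis by blast
  next
    case False then show ?thesis using S by auto
  qed
next
  fix S assume "S \<in> {S. S \<subseteq> A \<and> card S = Suc i} \<union> insert a ` {S. S \<subseteq> A \<and> card S = i}"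
  then show "S \<in> {S. S \<subseteq> insert a A \<and> card S = Suc i}"
  proof
    assume "S \<in> insert a ` {S. S \<subseteq> A \<and> card S = i}"
    then obtain T where "T \<subseteq> A" "card T = i" "S = insert a T" by auto
    moreover have "finite T" using \<open>T \<subseteq> A\<close> assms(1) finite_subset by blast
    ultimately show ?thesis using assms(2) by (auto simp: card_insert_if)
  qed auto
qed

lemma sum_subsets_insert:
  fixes g :: "nat \<Rightarrow> real"
  assumes "finite A" "a \<notin> A"
  shows "(\<Sum>S\<in>{S. S \<subseteq> insert a A \<and> card S = Suc i}. \<Prod>j\<in>S. g j) =
     (\<Sum>S\<in>{S. S \<subseteq> A \<and> card S = Suc i}. \<Prod>j\<in>S. g j) + g a * (\<Sum>S\<in>{S. S \<subseteq> A \<and> card S = i}. \<Prod>j\<in>S. g j)"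
proof -
  have fin: "finite {S. S \<subseteq> A \<and> card S = k}" for k
    using assms(1) by (rule finite_subset[rotated, OF finite_Pow_iff[THEN iffD2]]) auto
  have disj: "{S. S \<subseteq> A \<and> card S = Suc i} \<inter> insert a ` {S. S \<subseteq> A \<and> card S = i} = {}"
    using assms(2) by auto
  have inj: "inj_on (insert a) {S. S \<subseteq> A \<and> card S = i}"
    using assms(2) by (intro inj_onI) (metis insert_absorb insert_ident mem_Collect_eq subsetD)
  have "(\<Sum>S\<in>{S. S \<subseteq> insert a A \<and> card S = Suc i}. \<Prod>j\<in>S. g j) =
     (\<Sum>S\<in>{S. S \<subseteq> A \<and> card S = Suc i}. \<Prod>j\<in>S. g j) + (\<Sum>S\<in>insert a ` {S. S \<subseteq> A \<and> card S = i}. \<Prod>j\<in>S. g j)"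
    unfolding subsets_insert_card[OF assms] by (rule sum.union_disjoint) (use fin disj in auto)
  also have "(\<Sum>S\<in>insert a ` {S. S \<subseteq> A \<and> card S = i}. \<Prod>j\<in>S. g j) = (\<Sum>S\<in>{S. S \<subseteq> A \<and> card S = i}. \<Prod>j\<in>insert a S. g j)"
    by (rule sum.reindex[OF inj, unfolded comp_def])
  also have "\<dots> = (\<Sum>S\<in>{S. S \<subseteq> A \<and> card S = i}. g a * (\<Prod>j\<in>S. g j))"
    using assms by (intro sum.cong refl) (auto intro: prod.insert finite_subset)
  finally show ?thesis by (simp add: sum_distrib_left)
qed

lemma esym_sq_0: "esym_sq v 0 = 1"
proof -
  have "{S. S \<subseteq> {1..<v} \<and> card S = 0} = {{}}" by (auto dest: finite_subset)
  thus ?thesis by (simp add: esym_sq_def)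
qed

lemma esym_es: "esym_sq v i = real (es v i)"
proof (induction v arbitrary: i)
  case 0
  then show ?case by (cases i) (simp add: esym_sq_0, simp add: esym_sq_def)
next
  case (Suc v)
  show ?case
  proof (cases i)
    case 0 then show ?thesis by (simp add: esym_sq_0)
  next
    case (Suc k)
    show ?thesis
    proof (cases "v = 0")
      case True
      have "{S. S \<subseteq> {1..<Suc 0} \<and> card S = Suc k} = {}" by auto
      then show ?thesis using True Suc by (simp add: esym_sq_def)
    next
      case False
      have e: "{1..<Suc v} = insert v {1..<v}" using False by auto
      have "esym_sq (Suc v) (Suc k) = esym_sq v (Suc k) + (real v)^2 * esym_sq v k"
        unfolding esym_sq_def e by (rule sum_subsets_insert) auto
      then show ?thesis using Suc.IH Suc by simp
    qed
  qed
qed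



lemma powser_unique0:
  fixes b :: "nat \<Rightarrow> real"
  assumes r: "r > 0" and S: "\<And>x. \<bar>x\<bar> < r \<Longrightarrow> (\<lambda>n. b n * x^n) sums 0"
  shows "b n = 0"
proof (induction n rule: less_induct)
  case (less n)
  have sm: "(\<lambda>k. b (k+n) * x^k) sums 0" if "x \<noteq> 0" "norm x < r" for x
  proof -
    have "(\<lambda>k. b (k+n) * x^(k+n)) sums (0 - (\<Sum>i<n. b i * x^i))"
      using sums_split_initial_segment[OF S[of x]] that by simp
    also have "(\<Sum>i<n. b i * x^i) = 0" using less by simp
    finally have "(\<lambda>k. inverse (x^n) * (b (k+n) * x^(k+n))) sums (inverse (x^n) * 0)"
      by (intro sums_mult) simp
    also have "(\<lambda>k. inverse (x^n) * (b (k+n) * x^(k+n))) = (\<lambda>k. b (k+n) * x^k)"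
      using that by (auto simp: power_add field_simps)
    finally show ?thesis by simp
  qed
  have "((\<lambda>_. 0::real) \<longlongrightarrow> (\<lambda>k. b (k+n)) 0) (at (0::real))"
    using powser_limit_0_strong[where a="\<lambda>k. b (k+n)" and f="\<lambda>_. 0::real" and s=r] r sm by auto
  thus ?case using LIM_const_eq by fastforce
qed

lemma even_sums_iff:
  fixes c :: "nat \<Rightarrow> real"
  shows "(\<lambda>k. c k * x^(2*k)) sums s \<longleftrightarrow> (\<lambda>n. (if even n then c (n div 2) else 0) * x^n) sums s"
proof -
  have "(\<lambda>k. (\<lambda>n. (if even n then c (n div 2) else 0) * x^n) ((*) 2 k)) sums s \<longleftrightarrow>
        (\<lambda>n. (if even n then c (n div 2) else 0) * x^n) sums s"
    by (rule sums_mono_reindex) (auto simp: strict_mono_def elim!: evenE)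
  thus ?thesis by simp
qed

definition Gc :: "complex \<Rightarrow> complex" where "Gc z = (if z = 0 then 1 else z / sin z)"

lemma Gc_exp: "Gc has_fps_expansion Qf"
proof -
  have sd: "1 \<le> subdegree (fps_sin (1::complex))"
  proof (rule subdegree_geI)
    show "fps_sin (1::complex) \<noteq> 0"
      by (metis fps_sin_nth_1 fps_zero_nth zero_neq_one)
  qed simp
  have "(\<lambda>x::complex. if x = 0 then 1 else sin x / x ^ 1) has_fps_expansion fps_shift 1 (fps_sin 1)"
    by (rule has_fps_expansion_shift[OF has_fps_expansion_sin' sd]) simp
  hence "(\<lambda>x. inverse (if x = 0 then 1 else sin x / x ^ 1)) has_fps_expansion inverse (fps_shift 1 (fps_sin (1::complex)))"
    by (rule has_fps_expansion_inverse) simp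
  also have "(\<lambda>x::complex. inverse (if x = 0 then 1 else sin x / x ^ 1)) = Gc"
    by (auto simp: Gc_def fun_eq_iff)
  finally show ?thesis by (simp add: Qf_def Tf_def)
qed

lemma Gc_pow_exp: "(\<lambda>z. Gc z ^ k) has_fps_expansion Qf^k"
proof (induction k)
  case 0 then show ?case by simp
next
  case (Suc k)
  have "(\<lambda>z. Gc z * Gc z ^ k) has_fps_expansion Qf * Qf^k"
    by (rule has_fps_expansion_mult[OF Gc_exp Suc.IH])
  thus ?case by simp
qed

lemma sin_nz_ball: "z \<in> ball 0 pi \<Longrightarrow> z \<noteq> 0 \<Longrightarrow> sin (z::complex) \<noteq> 0"
proof
  assume z: "z \<in> ball 0 pi" "z \<noteq> 0" "sin z = 0"
  then obtain n :: int where n: "z = of_real (n * pi)" using sin_eq_0 by blast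
  have "norm z = \<bar>of_int n\<bar> * pi" unfolding n norm_of_real by (simp add: abs_mult)
  with z(1) have "\<bar>real_of_int n\<bar> < 1" by simp
  hence "n = 0" by linarith
  with n z(2) show False by simp
qed

lemma Gc_pow_hol: "(\<lambda>z. Gc z ^ k) holomorphic_on ball 0 pi"
proof (rule no_isolated_singularity'[where K="{0}"])
  show "((\<lambda>z. Gc z ^ k) \<longlongrightarrow> Gc z ^ k) (at z within ball 0 pi)" if "z \<in> {0}" for z
    using has_fps_expansion_imp_continuous[OF Gc_pow_exp[of k], of "ball 0 pi"] that
    by (simp add: continuous_within)
  have "(\<lambda>z. (z / sin z) ^ k) holomorphic_on ball 0 pi - {0}"
    using sin_nz_ball by (intro holomorphic_intros) auto
  thus "(\<lambda>z. Gc z ^ k) holomorphic_on ball 0 pi - {0}"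
    by (rule holomorphic_transform) (auto simp: Gc_def)
qed auto



lemma series_complex:
  assumes "norm z < pi"
  shows "(\<lambda>n. fps_nth ((Qf::complex fps)^k) n * z^n) sums (Gc z ^ k)"
proof -
  have "(\<lambda>n. (deriv ^^ n) (\<lambda>z. Gc z ^ k) 0 / fact n * (z - 0)^n) sums (Gc z ^ k)"
    by (rule holomorphic_power_series[OF Gc_pow_hol]) (use assms in simp)
  thus ?thesis by (simp add: fps_nth_fps_expansion[OF Gc_pow_exp])
qed

lemma cp_val:
  assumes "\<bar>x\<bar> < pi"
  shows "Gc (of_real x) ^ (2 * v) = of_real (cosec_pow (2 * real v) x)"
proof (cases "x = 0")
  case True then show ?thesis by (simp add: Gc_def cosec_pow_def)
next
  case False
  have pos: "x / sin x > 0"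
  proof (cases "x > 0")
    case True
    then have "sin x > 0" using assms by (intro sin_gt_zero) auto
    with True show ?thesis by simp
  next
    case False
    with \<open>x \<noteq> 0\<close> have "x < 0" by simp
    then have "sin (-x) > 0" using assms by (intro sin_gt_zero) auto
    with \<open>x < 0\<close> show ?thesis by (simp add: divide_neg_neg)
  qed
  have "cosec_pow (2 * real v) x = (x / sin x) ^ (2 * v)"
    using False pos powr_realpow[OF pos, of "2 * v"] by (simp add: cosec_pow_def)
  moreover have "Gc (of_real x) = of_real (x / sin x)"
    using False by (simp add: Gc_def sin_of_real)
  ultimately show ?thesis by simp
qed

lemma cp_even: "cosec_pow r (-x) = cosec_pow r x"
  by (simp add: cosec_pow_def)

lemma real_series:
  assumes "\<bar>x\<bar> < pi"
  shows "(\<lambda>n. Re (fps_nth ((Qf::complex fps)^(2 * v)) n) * x^n) sums cosec_pow (2 * real v) x"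
proof -
  have "(\<lambda>n. fps_nth ((Qf::complex fps)^(2 * v)) n * of_real x^n) sums (of_real (cosec_pow (2 * real v) x))"
    using series_complex[of "of_real x" "2 * v"] assms cp_val[OF assms, of v] by simp
  from sums_Re[OF this] show ?thesis by (simp flip: of_real_power)
qed

lemma even_series:
  assumes "\<bar>x\<bar> < pi"
  shows "(\<lambda>k. Re (fps_nth ((Qf::complex fps)^(2 * v)) (2*k)) * x^(2*k)) sums cosec_pow (2 * real v) x"
proof -
  let ?r = "\<lambda>n. Re (fps_nth ((Qf::complex fps)^(2 * v)) n)"
  have "(\<lambda>n. (?r n * x^n + ?r n * (-x)^n) / 2) sums ((cosec_pow (2 * real v) x + cosec_pow (2 * real v) (-x)) / 2)"
    by (intro sums_divide sums_add real_series) (use assms in auto)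
  also have "(\<lambda>n. (?r n * x^n + ?r n * (-x)^n) / 2) = (\<lambda>n. (if even n then ?r (2 * (n div 2)) else 0) * x^n)"
    by (auto simp: fun_eq_iff)
  finally show ?thesis unfolding even_sums_iff cp_even by simp
qed

lemma cosec_num_eq:
  "cosec_num (2 * real v) = (\<lambda>k. Re (fps_nth ((Qf::complex fps)^(2 * v)) (2*k)))"
proof -
  let ?c = "\<lambda>k. Re (fps_nth ((Qf::complex fps)^(2 * v)) (2*k))"
  let ?P = "\<lambda>c. \<forall>x. \<bar>x\<bar> < pi \<longrightarrow> (\<lambda>k. c k * x ^ (2 * k)) sums cosec_pow (2 * real v) x"
  have P: "?P ?c" using even_series by blast
  have U: "d = ?c" if d: "?P d" for d
  proof -
    let ?e = "\<lambda>n. if even n then d (n div 2) - ?c (n div 2) else 0"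
    have "?e n = 0" for n
    proof (rule powser_unique0[of pi ?e n])
      fix x :: real assume x: "\<bar>x\<bar> < pi"
      have "(\<lambda>k. d k * x ^ (2 * k) - ?c k * x^(2*k)) sums (cosec_pow (2 * real v) x - cosec_pow (2 * real v) x)"
        by (intro sums_diff even_series) (use d x in auto)
      hence "(\<lambda>k. (d k - ?c k) * x ^ (2 * k)) sums 0" by (simp add: algebra_simps)
      thus "(\<lambda>n. ?e n * x^n) sums 0" unfolding even_sums_iff by (simp add: if_distrib cong: if_cong)
    qed simp
    from this[of "2*k" for k] show "d = ?c" by (auto simp: fun_eq_iff)
  qed
  have "(THE c. ?P c) = ?c" by (rule the_equality[of ?P, OF P U]) 
  thus ?thesis unfolding cosec_num_def .
qed



theorem mainTheorem5:
  fixes v i :: nat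
  assumes "v \<ge> 1" and "i \<le> v - 1"
  shows "cosec_num (2 * real v) i =
    2 ^ (2 * i) * (Gamma (real (2 * v - 2 * i)) / Gamma (real (2 * v))) * esym_sq v i"
proof -
  define m where "m = v - i - 1"
  have v: "v = i + m + 1" using assms unfolding m_def by simp
  have cs: "fps_nth ((Qf::complex fps)^(2 * v)) (2*i) * fact (2*i+2*m+1) = 4^i * fact (2*m+1) * of_nat (es v i)"
    unfolding v by (rule closed_S)
  have "fps_nth ((Qf::complex fps)^(2 * v)) (2*i) = of_real (4^i * fact (2*m+1) / fact (2*i+2*m+1) * real (es v i))"
    using cs by (simp add: field_simps del: fact_Suc)
  hence "cosec_num (2 * real v) i = 4^i * fact (2*m+1) / fact (2*i+2*m+1) * real (es v i)"
    by (simp only: cosec_num_eq Re_complex_of_real)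
  moreover have "Gamma (real (2 * v - 2 * i)) = fact (2*m+1)"
    using Gamma_fact[of "2*m+1", where 'a=real] by (simp add: v algebra_simps)
  moreover have "Gamma (real (2 * v)) = fact (2*i+2*m+1)"
    using Gamma_fact[of "2*i+2*m+1", where 'a=real] by (simp add: v algebra_simps)
  moreover have "(2::real) ^ (2 * i) = 4^i" by (simp add: power_mult)
  ultimately show ?thesis by (simp add: esym_es)
qed


end
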